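(* Let $M$ be an $\aleph_0$-saturated model of a complete affine theory $T$. Then a function $f:M^n\to M$ is definable if and only if its graph $G_f=\{(\bar a,f(\bar a)):\bar a\in M^n\}$ is type-definable.
   Context: Affine continuous logic: $L$-structures are complete metric spaces $(M,d)$ with $d\le1$ and Lipschitz interpretations of function symbols and $[0,1]$-valued relation symbols. Affine formulas are built from $1$ and atomic formulas (including $d$) using only $r\cdot\phi$ ($r\in\mathbb R$), $\phi+\psi$, $\inf_x$, $\sup_x$. A condition is $\phi\le\psi$. $M$ is $\aleph_0$-saturated if every type over a finite subset of $M$ is realized in $M$. A predicate $P:M^m\to\mathbb R$ is definable (without parameters) if it is a uniform limit on $M^m$ of $\phi_k^M$ for affine formulas $\phi_k$. A function $f:M^n\to M^m$ is definable if the predicate $(\bar x,\bar y)\mapsto d(f(\bar x),\bar y)$ on $M^{n+m}$ is definable. A set $X\subseteq M^k$ is type-definable if it is the set of common solutions in $M$ of a family of conditions without parameters. *)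

theory Defs
  imports "HOL-Analysis.Analysis"
begin

text \<open>A language consists of function symbols of type 'f with arities fa
and relation symbols of type 'r with arities ra.  Variables are natural numbers.\<close>

datatype 'f aterm = Var nat | Fn 'f "'f aterm list"

datatype ('f, 'r) aformula =
    One
  | Rel 'r "'f aterm list"
  | Dist "'f aterm" "'f aterm"
  | Scale real "('f, 'r) aformula"
  | Add "('f, 'r) aformula" "('f, 'r) aformula"
  | Inf nat "('f, 'r) aformula"
  | Sup nat "('f, 'r) aformula"

fun wf_term :: "('f \<Rightarrow> nat) \<Rightarrow> 'f aterm \<Rightarrow> bool" where
  "wf_term fa (Var i) = True"
| "wf_term fa (Fn f ts) = (length ts = fa f \<and> (\<forall>t\<in>set ts. wf_term fa t))"

fun wf_formula :: "('f \<Rightarrow> nat) \<Rightarrow> ('r \<Rightarrow> nat) \<Rightarrow> ('f, 'r) aformula \<Rightarrow> bool" where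
  "wf_formula fa ra One = True"
| "wf_formula fa ra (Rel R ts) = (length ts = ra R \<and> (\<forall>t\<in>set ts. wf_term fa t))"
| "wf_formula fa ra (Dist t u) = (wf_term fa t \<and> wf_term fa u)"
| "wf_formula fa ra (Scale r \<phi>) = wf_formula fa ra \<phi>"
| "wf_formula fa ra (Add \<phi> \<psi>) = (wf_formula fa ra \<phi> \<and> wf_formula fa ra \<psi>)"
| "wf_formula fa ra (Inf x \<phi>) = wf_formula fa ra \<phi>"
| "wf_formula fa ra (Sup x \<phi>) = wf_formula fa ra \<phi>"

fun fv_term :: "'f aterm \<Rightarrow> nat set" where
  "fv_term (Var i) = {i}"
| "fv_term (Fn f ts) = (\<Union>t\<in>set ts. fv_term t)"

fun fv :: "('f, 'r) aformula \<Rightarrow> nat set" where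
  "fv One = {}"
| "fv (Rel R ts) = (\<Union>t\<in>set ts. fv_term t)"
| "fv (Dist t u) = fv_term t \<union> fv_term u"
| "fv (Scale r \<phi>) = fv \<phi>"
| "fv (Add \<phi> \<psi>) = fv \<phi> \<union> fv \<psi>"
| "fv (Inf x \<phi>) = fv \<phi> - {x}"
| "fv (Sup x \<phi>) = fv \<phi> - {x}"

record ('f, 'r, 'a) lstruct =
  univ :: "'a set"
  mdist :: "'a \<Rightarrow> 'a \<Rightarrow> real"
  fun_interp :: "'f \<Rightarrow> 'a list \<Rightarrow> 'a"
  rel_interp :: "'r \<Rightarrow> 'a list \<Rightarrow> real"

definition tuples :: "('f, 'r, 'a, 'b) lstruct_scheme \<Rightarrow> nat \<Rightarrow> 'a list set" where
  "tuples S m = {xs. length xs = m \<and> set xs \<subseteq> univ S}"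

definition tuple_dist :: "('f, 'r, 'a, 'b) lstruct_scheme \<Rightarrow> 'a list \<Rightarrow> 'a list \<Rightarrow> real" where
  "tuple_dist S xs ys = Max (insert 0 {mdist S (xs ! i) (ys ! i) | i. i < length xs})"

definition is_structure ::
  "('f \<Rightarrow> nat) \<Rightarrow> ('r \<Rightarrow> nat) \<Rightarrow> ('f, 'r, 'a, 'b) lstruct_scheme \<Rightarrow> bool" where
  "is_structure fa ra S \<longleftrightarrow>
     univ S \<noteq> {} \<and>
     Metric_space (univ S) (mdist S) \<and>
     Metric_space.mcomplete (univ S) (mdist S) \<and>
     (\<forall>x\<in>univ S. \<forall>y\<in>univ S. mdist S x y \<le> 1) \<and>
     (\<forall>f. (\<forall>xs\<in>tuples S (fa f). fun_interp S f xs \<in> univ S) \<and>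
          (\<exists>L. \<forall>xs\<in>tuples S (fa f). \<forall>ys\<in>tuples S (fa f).
                 mdist S (fun_interp S f xs) (fun_interp S f ys) \<le> L * tuple_dist S xs ys)) \<and>
     (\<forall>R. (\<forall>xs\<in>tuples S (ra R). 0 \<le> rel_interp S R xs \<and> rel_interp S R xs \<le> 1) \<and>
          (\<exists>L. \<forall>xs\<in>tuples S (ra R). \<forall>ys\<in>tuples S (ra R).
                 \<bar>rel_interp S R xs - rel_interp S R ys\<bar> \<le> L * tuple_dist S xs ys))"

fun teval :: "('f, 'r, 'a, 'b) lstruct_scheme \<Rightarrow> (nat \<Rightarrow> 'a) \<Rightarrow> 'f aterm \<Rightarrow> 'a" where
  "teval S \<sigma> (Var i) = \<sigma> i"
| "teval S \<sigma> (Fn f ts) = fun_interp S f (map (teval S \<sigma>) ts)"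

fun feval :: "('f, 'r, 'a, 'b) lstruct_scheme \<Rightarrow> (nat \<Rightarrow> 'a) \<Rightarrow> ('f, 'r) aformula \<Rightarrow> real" where
  "feval S \<sigma> One = 1"
| "feval S \<sigma> (Rel R ts) = rel_interp S R (map (teval S \<sigma>) ts)"
| "feval S \<sigma> (Dist t u) = mdist S (teval S \<sigma> t) (teval S \<sigma> u)"
| "feval S \<sigma> (Scale r \<phi>) = r * feval S \<sigma> \<phi>"
| "feval S \<sigma> (Add \<phi> \<psi>) = feval S \<sigma> \<phi> + feval S \<sigma> \<psi>"
| "feval S \<sigma> (Inf x \<phi>) = (INF a\<in>univ S. feval S (\<sigma>(x := a)) \<phi>)"
| "feval S \<sigma> (Sup x \<phi>) = (SUP a\<in>univ S. feval S (\<sigma>(x := a)) \<phi>)"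

definition asg :: "'a list \<Rightarrow> nat \<Rightarrow> 'a" where
  "asg xs = (\<lambda>i. xs ! i)"

text \<open>A condition is a pair (phi, psi), read as phi \<le> psi.\<close>
type_synonym ('f, 'r) condition = "('f, 'r) aformula \<times> ('f, 'r) aformula"

definition wf_condition :: "('f \<Rightarrow> nat) \<Rightarrow> ('r \<Rightarrow> nat) \<Rightarrow> nat \<Rightarrow> ('f, 'r) condition \<Rightarrow> bool" where
  "wf_condition fa ra k c \<longleftrightarrow>
     wf_formula fa ra (fst c) \<and> wf_formula fa ra (snd c) \<and> fv (fst c) \<union> fv (snd c) \<subseteq> {..<k}"

definition definable_pred ::
  "('f \<Rightarrow> nat) \<Rightarrow> ('r \<Rightarrow> nat) \<Rightarrow> ('f, 'r, 'a, 'b) lstruct_scheme \<Rightarrow> nat \<Rightarrow> ('a list \<Rightarrow> real) \<Rightarrow> bool" where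
  "definable_pred fa ra S m P \<longleftrightarrow>
     (\<exists>\<phi>s :: nat \<Rightarrow> ('f, 'r) aformula.
        (\<forall>k. wf_formula fa ra (\<phi>s k) \<and> fv (\<phi>s k) \<subseteq> {..<m}) \<and>
        (\<forall>\<epsilon>>0. \<exists>N. \<forall>k\<ge>N. \<forall>xs\<in>tuples S m. \<bar>feval S (asg xs) (\<phi>s k) - P xs\<bar> \<le> \<epsilon>))"

definition definable_fun ::
  "('f \<Rightarrow> nat) \<Rightarrow> ('r \<Rightarrow> nat) \<Rightarrow> ('f, 'r, 'a, 'b) lstruct_scheme \<Rightarrow> nat \<Rightarrow> ('a list \<Rightarrow> 'a) \<Rightarrow> bool" where
  "definable_fun fa ra S n f \<longleftrightarrow>
     definable_pred fa ra S (Suc n) (\<lambda>xs. mdist S (f (take n xs)) (xs ! n))"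

definition type_definable ::
  "('f \<Rightarrow> nat) \<Rightarrow> ('r \<Rightarrow> nat) \<Rightarrow> ('f, 'r, 'a, 'b) lstruct_scheme \<Rightarrow> nat \<Rightarrow> 'a list set \<Rightarrow> bool" where
  "type_definable fa ra S k X \<longleftrightarrow>
     (\<exists>\<Sigma> :: ('f, 'r) condition set.
        (\<forall>c\<in>\<Sigma>. wf_condition fa ra k c) \<and>
        X = {xs\<in>tuples S k. \<forall>c\<in>\<Sigma>. feval S (asg xs) (fst c) \<le> feval S (asg xs) (snd c)})"

text \<open>A set \<Sigma> of conditions in the variables 0..n-1 with parameters b (a finite
  tuple from M, assigned to the variables n..n+length b-1) is consistent with the
  affine theory of (M, b) iff no nonnegative combination of the conditions is
  refuted, i.e. for every finite \<Sigma>0 \<subseteq> \<Sigma> and weights \<lambda> \<ge> 0 the affine sentence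
  inf_x \<Sum> \<lambda>_i (\<phi>_i - \<psi>_i) has value \<le> 0 in M (affine compactness / Farkas).\<close>
definition affinely_consistent ::
  "('f, 'r, 'a, 'b) lstruct_scheme \<Rightarrow> nat \<Rightarrow> 'a list \<Rightarrow> ('f, 'r) condition set \<Rightarrow> bool" where
  "affinely_consistent S n b \<Sigma> \<longleftrightarrow>
     (\<forall>\<Sigma>0 w. finite \<Sigma>0 \<and> \<Sigma>0 \<subseteq> \<Sigma> \<and> (\<forall>c\<in>\<Sigma>0. 0 \<le> w c) \<longrightarrow>
        (INF xs\<in>tuples S n. \<Sum>c\<in>\<Sigma>0. w c * (feval S (asg (xs @ b)) (fst c) - feval S (asg (xs @ b)) (snd c))) \<le> 0)"

text \<open>M is \<aleph>0-saturated: every (partial, hence every complete) type in finitely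
  many variables over a finite set of parameters is realized in M.\<close>
definition aleph0_saturated ::
  "('f \<Rightarrow> nat) \<Rightarrow> ('r \<Rightarrow> nat) \<Rightarrow> ('f, 'r, 'a, 'b) lstruct_scheme \<Rightarrow> bool" where
  "aleph0_saturated fa ra S \<longleftrightarrow>
     (\<forall>n b \<Sigma>. set b \<subseteq> univ S \<and> (\<forall>c\<in>\<Sigma>. wf_condition fa ra (n + length b) c) \<and>
        affinely_consistent S n b \<Sigma> \<longrightarrow>
        (\<exists>xs\<in>tuples S n. \<forall>c\<in>\<Sigma>. feval S (asg (xs @ b)) (fst c) \<le> feval S (asg (xs @ b)) (snd c)))"

end

theory Submission
  imports Defs
begin


fun rent :: "(nat \<Rightarrow> nat) \<Rightarrow> 'f aterm \<Rightarrow> 'f aterm" where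
  "rent h (Var i) = Var (h i)"
| "rent h (Fn f ts) = Fn f (map (rent h) ts)"

fun renf :: "(nat \<Rightarrow> nat) \<Rightarrow> ('f,'r) aformula \<Rightarrow> ('f,'r) aformula" where
  "renf h One = One"
| "renf h (Rel R ts) = Rel R (map (rent h) ts)"
| "renf h (Dist t u) = Dist (rent h t) (rent h u)"
| "renf h (Scale r \<phi>) = Scale r (renf h \<phi>)"
| "renf h (Add \<phi> \<psi>) = Add (renf h \<phi>) (renf h \<psi>)"
| "renf h (Inf x \<phi>) = Inf (h x) (renf h \<phi>)"
| "renf h (Sup x \<phi>) = Sup (h x) (renf h \<phi>)"

lemma teval_rent: "teval S \<sigma> (rent h t) = teval S (\<lambda>i. \<sigma> (h i)) t"
proof (induction t)
  case (Fn g ts)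
  have "\<forall>x\<in>set ts. teval S \<sigma> (rent h x) = teval S (\<lambda>i. \<sigma> (h i)) x"
    using Fn by auto
  then have "map (\<lambda>x. teval S \<sigma> (rent h x)) ts = map (teval S (\<lambda>i. \<sigma> (h i))) ts"
    by (simp add: map_eq_conv)
  then show ?case by (simp add: comp_def del: map_eq_conv)
qed simp

lemma feval_renf: "inj h \<Longrightarrow> feval S \<sigma> (renf h \<phi>) = feval S (\<lambda>i. \<sigma> (h i)) \<phi>"
proof (induction \<phi> arbitrary: \<sigma>)
  case (Inf x \<phi>)
  have e: "\<And>a. (\<lambda>i. (\<sigma>(h x := a)) (h i)) = (\<lambda>i. \<sigma> (h i))(x := a)"
    using Inf.prems by (auto simp: fun_eq_iff inj_eq)
  have "feval S \<sigma> (renf h (Inf x \<phi>)) = (INF a\<in>univ S. feval S (\<sigma>(h x := a)) (renf h \<phi>))"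
    by simp
  also have "\<dots> = (INF a\<in>univ S. feval S ((\<lambda>i. \<sigma> (h i))(x := a)) \<phi>)"
    using Inf by (simp only: e)
  finally show ?case by simp
next
  case (Sup x \<phi>)
  have e: "\<And>a. (\<lambda>i. (\<sigma>(h x := a)) (h i)) = (\<lambda>i. \<sigma> (h i))(x := a)"
    using Sup.prems by (auto simp: fun_eq_iff inj_eq)
  have "feval S \<sigma> (renf h (Sup x \<phi>)) = (SUP a\<in>univ S. feval S (\<sigma>(h x := a)) (renf h \<phi>))"
    by simp
  also have "\<dots> = (SUP a\<in>univ S. feval S ((\<lambda>i. \<sigma> (h i))(x := a)) \<phi>)"
    using Sup by (simp only: e)
  finally show ?case by simp
qed (auto simp: teval_rent comp_def)

lemma fv_rent: "fv_term (rent h t) = h ` fv_term t"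
  by (induction t) auto

lemma fv_renf: "inj h \<Longrightarrow> fv (renf h \<phi>) = h ` fv \<phi>"
  by (induction \<phi>) (auto simp: fv_rent image_set_diff image_Union)

lemma wf_rent: "wf_term fa (rent h t) = wf_term fa t"
  by (induction t) auto

lemma wf_renf: "wf_formula fa ra (renf h \<phi>) = wf_formula fa ra \<phi>"
  by (induction \<phi>) (auto simp: wf_rent)

lemma teval_agree: "(\<forall>i\<in>fv_term t. \<sigma> i = \<tau> i) \<Longrightarrow> teval S \<sigma> t = teval S \<tau> t"
proof (induction t)
  case (Fn g ts)
  have "map (teval S \<sigma>) ts = map (teval S \<tau>) ts"
    using Fn by (simp add: map_eq_conv)
  then show ?case by (simp del: map_eq_conv)
qed simp

lemma feval_agree: "(\<forall>i\<in>fv \<phi>. \<sigma> i = \<tau> i) \<Longrightarrow> feval S \<sigma> \<phi> = feval S \<tau> \<phi>"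
proof (induction \<phi> arbitrary: \<sigma> \<tau>)
  case (Rel R ts)
  then show ?case using teval_agree[of _ \<sigma> \<tau> S] by (auto intro!: arg_cong[where f="rel_interp S R"])
next
  case (Dist t u)
  then show ?case using teval_agree[of _ \<sigma> \<tau> S] by auto
next
  case (Inf x \<phi>)
  have "\<And>a. feval S (\<sigma>(x := a)) \<phi> = feval S (\<tau>(x := a)) \<phi>"
    using Inf by auto
  then show ?case by simp
next
  case (Sup x \<phi>)
  have "\<And>a. feval S (\<sigma>(x := a)) \<phi> = feval S (\<tau>(x := a)) \<phi>"
    using Sup by auto
  then show ?case by simp
next
  case (Add \<phi>1 \<phi>2)
  then show ?case by (metis UnCI feval.simps(5) fv.simps(5))
qed auto

lemma teval_univ:
  assumes "is_structure fa ra S" "wf_term fa t" "\<forall>i. \<sigma> i \<in> univ S"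
  shows "teval S \<sigma> t \<in> univ S"
  using assms(2)
proof (induction t)
  case (Var i) then show ?case using assms(3) by simp
next
  case (Fn g ts)
  have "map (teval S \<sigma>) ts \<in> tuples S (fa g)"
    using Fn by (auto simp: tuples_def)
  then show ?case using assms(1) unfolding is_structure_def by auto
qed

fun bnd :: "('f,'r) aformula \<Rightarrow> real" where
  "bnd One = 1"
| "bnd (Rel R ts) = 1"
| "bnd (Dist t u) = 1"
| "bnd (Scale r \<phi>) = \<bar>r\<bar> * bnd \<phi>"
| "bnd (Add \<phi> \<psi>) = bnd \<phi> + bnd \<psi>"
| "bnd (Inf x \<phi>) = bnd \<phi>"
| "bnd (Sup x \<phi>) = bnd \<phi>"

lemma feval_bnd:
  assumes S: "is_structure fa ra S"
  shows "wf_formula fa ra \<phi> \<Longrightarrow> \<forall>i. \<sigma> i \<in> univ S \<Longrightarrow> \<bar>feval S \<sigma> \<phi>\<bar> \<le> bnd \<phi>"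
proof (induction \<phi> arbitrary: \<sigma>)
  case (Rel R ts)
  have "map (teval S \<sigma>) ts \<in> tuples S (ra R)"
    using Rel teval_univ[OF S] by (auto simp: tuples_def)
  then show ?case using S unfolding is_structure_def by auto
next
  case (Dist t u)
  have ms: "Metric_space (univ S) (mdist S)" using S unfolding is_structure_def by auto
  have "teval S \<sigma> t \<in> univ S" "teval S \<sigma> u \<in> univ S"
    using Dist teval_univ[OF S] by auto
  then show ?case using S Metric_space.nonneg[OF ms] unfolding is_structure_def by auto
next
  case (Scale r \<phi>)
  then show ?case by (auto simp: abs_mult intro: mult_left_mono)
next
  case (Add \<phi> \<psi>)
  then have "\<bar>feval S \<sigma> \<phi>\<bar> \<le> bnd \<phi>" "\<bar>feval S \<sigma> \<psi>\<bar> \<le> bnd \<psi>" by auto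
  then show ?case by (simp add: abs_triangle_ineq order_trans[OF abs_triangle_ineq add_mono])
next
  case (Inf x \<phi>)
  have ne: "univ S \<noteq> {}" using S unfolding is_structure_def by auto
  have b0: "\<And>a. a \<in> univ S \<Longrightarrow> \<bar>feval S (\<sigma>(x := a)) \<phi>\<bar> \<le> bnd \<phi>"
    using Inf by auto
  have b: "- bnd \<phi> \<le> feval S (\<sigma>(x := a)) \<phi> \<and> feval S (\<sigma>(x := a)) \<phi> \<le> bnd \<phi>" if "a \<in> univ S" for a
    using abs_le_D1[OF b0[OF that]] abs_le_D2[OF b0[OF that]] by linarith
  have bb: "bdd_below ((\<lambda>a. feval S (\<sigma>(x := a)) \<phi>) ` univ S)"
    using b by (intro bdd_belowI2[where m="- bnd \<phi>"]) auto
  have l: "- bnd \<phi> \<le> (INF a\<in>univ S. feval S (\<sigma>(x := a)) \<phi>)"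
    using b ne by (intro cINF_greatest) auto
  obtain a where a: "a \<in> univ S" using ne by auto
  have "(INF a\<in>univ S. feval S (\<sigma>(x := a)) \<phi>) \<le> feval S (\<sigma>(x := a)) \<phi>"
    using bb a by (intro cINF_lower) auto
  also have "\<dots> \<le> bnd \<phi>" using b[OF a] by linarith
  finally show ?case using l by auto
next
  case (Sup x \<phi>)
  have ne: "univ S \<noteq> {}" using S unfolding is_structure_def by auto
  have b0: "\<And>a. a \<in> univ S \<Longrightarrow> \<bar>feval S (\<sigma>(x := a)) \<phi>\<bar> \<le> bnd \<phi>"
    using Sup by auto
  have b: "- bnd \<phi> \<le> feval S (\<sigma>(x := a)) \<phi> \<and> feval S (\<sigma>(x := a)) \<phi> \<le> bnd \<phi>" if "a \<in> univ S" for a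
    using abs_le_D1[OF b0[OF that]] abs_le_D2[OF b0[OF that]] by linarith
  have bb: "bdd_above ((\<lambda>a. feval S (\<sigma>(x := a)) \<phi>) ` univ S)"
    using b by (intro bdd_aboveI2[where M="bnd \<phi>"]) auto
  have l: "(SUP a\<in>univ S. feval S (\<sigma>(x := a)) \<phi>) \<le> bnd \<phi>"
    using b ne by (intro cSUP_least) auto
  obtain a where a: "a \<in> univ S" using ne by auto
  have "- bnd \<phi> \<le> feval S (\<sigma>(x := a)) \<phi>" using b[OF a] by linarith
  also have "\<dots> \<le> (SUP a\<in>univ S. feval S (\<sigma>(x := a)) \<phi>)"
    using bb a by (intro cSUP_upper) auto
  finally show ?case using l by auto
qed auto

fun fsum :: "(('f,'r) condition \<Rightarrow> real) \<Rightarrow> ('f,'r) condition list \<Rightarrow> ('f,'r) aformula" where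
  "fsum w [] = Scale 0 One"
| "fsum w (c#cs) = Add (Scale (w c) (Add (fst c) (Scale (-1) (snd c)))) (fsum w cs)"

lemma feval_fsum:
  "feval S \<sigma> (fsum w cs) = (\<Sum>c\<leftarrow>cs. w c * (feval S \<sigma> (fst c) - feval S \<sigma> (snd c)))"
  by (induction cs) auto

lemma fv_fsum: "fv (fsum w cs) \<subseteq> (\<Union>c\<in>set cs. fv (fst c) \<union> fv (snd c))"
  by (induction cs) auto

lemma wf_fsum: "(\<forall>c\<in>set cs. wf_formula fa ra (fst c) \<and> wf_formula fa ra (snd c)) \<Longrightarrow> wf_formula fa ra (fsum w cs)"
  by (induction cs) auto



lemma tuples_Suc_split:
  assumes "zs \<in> tuples S (Suc n)"
  shows "zs = take n zs @ [zs ! n]" "take n zs \<in> tuples S n" "zs ! n \<in> univ S"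
proof -
  have l: "length zs = Suc n" using assms by (simp add: tuples_def)
  show "zs = take n zs @ [zs ! n]"
    using take_Suc_conv_app_nth[of n zs] l by simp
  show "take n zs \<in> tuples S n" using assms l by (auto simp: tuples_def dest: in_set_takeD)
  show "zs ! n \<in> univ S" using assms l by (auto simp: tuples_def)
qed

lemma easy_dir:
  fixes fa :: "'f \<Rightarrow> nat" and ra :: "'r \<Rightarrow> nat" and S :: "('f, 'r, 'a) lstruct"
  assumes S: "is_structure fa ra S"
    and fS: "\<forall>xs\<in>tuples S n. f xs \<in> univ S"
    and df: "definable_fun fa ra S n f"
  shows "type_definable fa ra S (Suc n) {xs @ [f xs] | xs. xs \<in> tuples S n}"
proof -
  have ms: "Metric_space (univ S) (mdist S)" using S by (simp add: is_structure_def)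
  define P where "P xs = mdist S (f (take n xs)) (xs ! n)" for xs
  obtain \<phi>s :: "nat \<Rightarrow> ('f,'r) aformula" where
    wf: "\<forall>k. wf_formula fa ra (\<phi>s k) \<and> fv (\<phi>s k) \<subseteq> {..<Suc n}" and
    conv: "\<forall>\<epsilon>>0. \<exists>N. \<forall>k\<ge>N. \<forall>xs\<in>tuples S (Suc n). \<bar>feval S (asg xs) (\<phi>s k) - P xs\<bar> \<le> \<epsilon>"
    using df unfolding definable_fun_def definable_pred_def P_def by blast
  define N where "N j = (SOME N. \<forall>k\<ge>N. \<forall>xs\<in>tuples S (Suc n).
      \<bar>feval S (asg xs) (\<phi>s k) - P xs\<bar> \<le> 1 / (real j + 1))" for j
  have N: "\<forall>k\<ge>N j. \<forall>xs\<in>tuples S (Suc n). \<bar>feval S (asg xs) (\<phi>s k) - P xs\<bar> \<le> 1 / (real j + 1)" for j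
  proof -
    have "1 / (real j + 1) > 0" by simp
    then have "\<exists>N. \<forall>k\<ge>N. \<forall>xs\<in>tuples S (Suc n). \<bar>feval S (asg xs) (\<phi>s k) - P xs\<bar> \<le> 1 / (real j + 1)"
      using conv by blast
    then show ?thesis unfolding N_def by (rule someI_ex)
  qed
  define \<Sigma> :: "('f,'r) condition set" where
    "\<Sigma> = {(\<phi>s k, Scale (1 / (real j + 1)) One) | j k. k \<ge> N j}"
  have wfc: "\<forall>c\<in>\<Sigma>. wf_condition fa ra (Suc n) c"
    using wf by (auto simp: \<Sigma>_def wf_condition_def)
  have eq: "{xs @ [f xs] | xs. xs \<in> tuples S n} =
    {xs\<in>tuples S (Suc n). \<forall>c\<in>\<Sigma>. feval S (asg xs) (fst c) \<le> feval S (asg xs) (snd c)}"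
  proof (intro equalityI subsetI)
    fix zs assume "zs \<in> {xs @ [f xs] | xs. xs \<in> tuples S n}"
    then obtain xs where zs: "zs = xs @ [f xs]" and xs: "xs \<in> tuples S n" by blast
    have fx: "f xs \<in> univ S" using fS xs by auto
    have lx: "length xs = n" using xs by (simp add: tuples_def)
    have zt: "zs \<in> tuples S (Suc n)" using xs fx zs by (auto simp: tuples_def)
    have P0: "P zs = 0" using zs lx fx ms by (simp add: P_def nth_append Metric_space.zero)
    show "zs \<in> {xs\<in>tuples S (Suc n). \<forall>c\<in>\<Sigma>. feval S (asg xs) (fst c) \<le> feval S (asg xs) (snd c)}"
    proof (intro CollectI conjI ballI zt)
      fix c assume "c \<in> \<Sigma>"
      then obtain j k where c: "c = (\<phi>s k, Scale (1 / (real j + 1)) One)" "k \<ge> N j"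
        by (auto simp: \<Sigma>_def)
      have "\<bar>feval S (asg zs) (\<phi>s k) - P zs\<bar> \<le> 1 / (real j + 1)" using N c(2) zt by blast
      then show "feval S (asg zs) (fst c) \<le> feval S (asg zs) (snd c)"
        using P0 c(1) by simp
    qed
  next
    fix zs assume "zs \<in> {xs\<in>tuples S (Suc n). \<forall>c\<in>\<Sigma>. feval S (asg xs) (fst c) \<le> feval S (asg xs) (snd c)}"
    then have zt: "zs \<in> tuples S (Suc n)" and all: "\<forall>c\<in>\<Sigma>. feval S (asg zs) (fst c) \<le> feval S (asg zs) (snd c)"
      by auto
    have Pj: "P zs \<le> 2 / (real j + 1)" for j
    proof -
      have c: "(\<phi>s (N j), Scale (1 / (real j + 1)) One) \<in> \<Sigma>" by (auto simp: \<Sigma>_def)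
      have "feval S (asg zs) (\<phi>s (N j)) \<le> 1 / (real j + 1)" using all c by fastforce
      moreover have "\<bar>feval S (asg zs) (\<phi>s (N j)) - P zs\<bar> \<le> 1 / (real j + 1)" using N zt by blast
      ultimately show ?thesis by simp
    qed
    have "P zs \<le> 0"
    proof (rule ccontr)
      assume "\<not> P zs \<le> 0"
      then have "P zs / 2 > 0" by simp
      then obtain j where "inverse (real (Suc j)) < P zs / 2" using reals_Archimedean by blast
      then have "2 / (real j + 1) < P zs" by (simp add: field_simps)
      then show False using Pj[of j] by simp
    qed
    moreover have "P zs \<ge> 0" using ms by (simp add: P_def Metric_space.nonneg)
    ultimately have "P zs = 0" by simp
    then have "f (take n zs) = zs ! n"
      using ms fS tuples_Suc_split[OF zt] by (simp add: P_def Metric_space.zero)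
    then have "zs = take n zs @ [f (take n zs)]" using tuples_Suc_split(1)[OF zt] by simp
    then show "zs \<in> {xs @ [f xs] | xs. xs \<in> tuples S n}" using tuples_Suc_split(2)[OF zt] by blast
  qed
  show ?thesis unfolding type_definable_def using wfc eq by blast
qed



lemma hard_eps:
  fixes fa :: "'f \<Rightarrow> nat" and ra :: "'r \<Rightarrow> nat" and S :: "('f, 'r, 'a) lstruct"
    and \<Sigma> :: "('f,'r) condition set"
  assumes S: "is_structure fa ra S" and sat: "aleph0_saturated fa ra S"
    and fS: "\<forall>xs\<in>tuples S n. f xs \<in> univ S"
    and \<Sigma>wf: "\<forall>c\<in>\<Sigma>. wf_condition fa ra (Suc n) c"
    and G: "{xs @ [f xs] | xs. xs \<in> tuples S n} =
      {xs\<in>tuples S (Suc n). \<forall>c\<in>\<Sigma>. feval S (asg xs) (fst c) \<le> feval S (asg xs) (snd c)}"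
    and e: "\<epsilon> > 0"
  shows "\<exists>\<theta>. wf_formula fa ra \<theta> \<and> fv \<theta> \<subseteq> {..<Suc n} \<and>
     (\<forall>xs\<in>tuples S n. \<forall>y\<in>univ S. \<bar>feval S (asg (xs @ [y])) \<theta> - mdist S (f xs) y\<bar> \<le> \<epsilon>)"
proof -
  have ms: "Metric_space (univ S) (mdist S)" using S by (simp add: is_structure_def)
  have ne: "univ S \<noteq> {}" using S by (simp add: is_structure_def)
  then obtain a0 where a0: "a0 \<in> univ S" by auto
  define D :: "('f,'r) condition \<Rightarrow> (nat \<Rightarrow> 'a) \<Rightarrow> real" where
    "D c \<tau> = feval S \<tau> (fst c) - feval S \<tau> (snd c)" for c \<tau>
  have fv\<Sigma>: "fv (fst c) \<union> fv (snd c) \<subseteq> {..<Suc n}" if "c \<in> \<Sigma>" for c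
    using \<Sigma>wf that by (auto simp: wf_condition_def)
  have Dagree: "D c \<tau> = D c \<tau>'" if "\<forall>i\<in>fv (fst c) \<union> fv (snd c). \<tau> i = \<tau>' i" for c \<tau> \<tau>'
    using that feval_agree[of "fst c" \<tau> \<tau>' S] feval_agree[of "snd c" \<tau> \<tau>' S]
    by (auto simp: D_def)
  have Gin: "D c \<tau> \<le> 0"
    if "xs \<in> tuples S n" "c \<in> \<Sigma>" "\<forall>i<Suc n. \<tau> i = asg (xs @ [f xs]) i" for xs c \<tau>
  proof -
    have "xs @ [f xs] \<in> {xs @ [f xs] | xs. xs \<in> tuples S n}" using that(1) by blast
    then have "D c (asg (xs @ [f xs])) \<le> 0" using G that(2) by (auto simp: D_def)
    moreover have "D c \<tau> = D c (asg (xs @ [f xs]))"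
      using that(3) fv\<Sigma>[OF that(2)] by (intro Dagree) auto
    ultimately show ?thesis by simp
  qed
  have Gout: "y = f xs"
    if "xs \<in> tuples S n" "y \<in> univ S" "\<forall>c\<in>\<Sigma>. D c (asg (xs @ [y])) \<le> 0" for xs y
  proof -
    have "xs @ [y] \<in> tuples S (Suc n)" using that by (auto simp: tuples_def)
    then have "xs @ [y] \<in> {xs @ [f xs] | xs. xs \<in> tuples S n}" using G that(3) by (auto simp: D_def)
    then obtain ys where ys: "xs @ [y] = ys @ [f ys]" "ys \<in> tuples S n" by blast
    then have "xs = ys" using that(1) by (auto simp: tuples_def)
    then show ?thesis using ys by simp
  qed
  define h where "h = (\<lambda>i::nat. if i = n then Suc n else if i = Suc n then n else i)"
  have injh: "inj h" unfolding inj_def h_def by auto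
  define rc :: "('f,'r) condition \<Rightarrow> ('f,'r) condition" where
    "rc c = (renf h (fst c), renf h (snd c))" for c
  define cd :: "('f,'r) condition" where "cd = (Scale \<epsilon> One, Dist (Var n) (Var (Suc n)))"
  define \<Sigma>' where "\<Sigma>' = \<Sigma> \<union> rc ` \<Sigma> \<union> {cd}"
  have Drc: "D (rc c) \<tau> = D c (\<lambda>i. \<tau> (h i))" for c \<tau>
    by (simp add: D_def rc_def feval_renf[OF injh])
  have fvrc: "fv (fst (rc c)) \<union> fv (snd (rc c)) \<subseteq> h ` {..<Suc n}" if "c \<in> \<Sigma>" for c
  proof -
    have "fv (fst (rc c)) \<union> fv (snd (rc c)) = h ` (fv (fst c) \<union> fv (snd c))"
      by (simp add: rc_def fv_renf[OF injh] image_Un)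
    then show ?thesis using fv\<Sigma>[OF that] by auto
  qed
  have hn: "n \<notin> h ` {..<Suc n}" by (auto simp: h_def)
  have hsub: "h ` {..<Suc n} \<subseteq> {..<Suc (Suc n)}" by (auto simp: h_def)
  have wf': "\<forall>c\<in>\<Sigma>'. wf_condition fa ra (Suc (Suc n) + length []) c"
  proof
    fix c assume "c \<in> \<Sigma>'"
    then consider "c \<in> \<Sigma>" | c' where "c' \<in> \<Sigma>" "c = rc c'" | "c = cd"
      by (auto simp: \<Sigma>'_def)
    then show "wf_condition fa ra (Suc (Suc n) + length []) c"
    proof cases
      case 1
      have "fv (fst c) \<union> fv (snd c) \<subseteq> {..<Suc (Suc n)}" using fv\<Sigma>[OF 1] by fastforce
      then show ?thesis using \<Sigma>wf 1 by (simp add: wf_condition_def)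
    next
      case 2
      have "fv (fst c) \<union> fv (snd c) \<subseteq> {..<Suc (Suc n)}" using fvrc[OF 2(1)] hsub 2(2) by blast
      then show ?thesis using \<Sigma>wf 2
        by (simp add: wf_condition_def rc_def wf_renf)
    next
      case 3 then show ?thesis by (auto simp: wf_condition_def cd_def)
    qed
  qed
  have cd\<Sigma>: "cd \<notin> \<Sigma>"
  proof
    assume "cd \<in> \<Sigma>"
    from fv\<Sigma>[OF this] show False by (auto simp: cd_def)
  qed
  have cdrc: "cd \<notin> rc ` \<Sigma>"
  proof
    assume "cd \<in> rc ` \<Sigma>"
    then obtain c where c: "c \<in> \<Sigma>" "cd = rc c" by auto
    have "n \<in> fv (fst (rc c)) \<union> fv (snd (rc c))" using c(2)[symmetric] by (auto simp: cd_def)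
    then show False using fvrc[OF c(1)] hn by auto
  qed
  have notreal: "\<not> (\<exists>zs\<in>tuples S (Suc (Suc n)). \<forall>c\<in>\<Sigma>'.
      feval S (asg (zs @ [])) (fst c) \<le> feval S (asg (zs @ [])) (snd c))"
  proof
    assume "\<exists>zs\<in>tuples S (Suc (Suc n)). \<forall>c\<in>\<Sigma>'.
      feval S (asg (zs @ [])) (fst c) \<le> feval S (asg (zs @ [])) (snd c)"
    then obtain zs where zs: "zs \<in> tuples S (Suc (Suc n))"
      and all: "\<forall>c\<in>\<Sigma>'. D c (asg zs) \<le> 0" by (auto simp: D_def)
    have lz: "length zs = Suc (Suc n)" using zs by (simp add: tuples_def)
    define xs where "xs = take n zs"
    define y where "y = zs ! n"
    define y' where "y' = zs ! Suc n"
    have zeq: "zs = xs @ [y, y']"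
    proof -
      have "drop n zs = [y, y']"
        using lz Cons_nth_drop_Suc[of n zs] Cons_nth_drop_Suc[of "Suc n" zs]
        by (simp add: y_def y'_def)
      then show ?thesis using append_take_drop_id[of n zs] by (simp add: xs_def)
    qed
    have lx: "length xs = n" using lz by (simp add: xs_def)
    have xt: "xs \<in> tuples S n" "y \<in> univ S" "y' \<in> univ S"
      using zs zeq lx by (auto simp: tuples_def)
    have 1: "y = f xs"
    proof (rule Gout[OF xt(1,2)], intro ballI)
      fix c assume c: "c \<in> \<Sigma>"
      have "D c (asg zs) \<le> 0" using all c by (auto simp: \<Sigma>'_def)
      moreover have "D c (asg zs) = D c (asg (xs @ [y]))"
        using fv\<Sigma>[OF c] zeq lx
        by (intro Dagree) (auto simp: asg_def nth_append)
      ultimately show "D c (asg (xs @ [y])) \<le> 0" by simp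
    qed
    have 2: "y' = f xs"
    proof (rule Gout[OF xt(1,3)], intro ballI)
      fix c assume c: "c \<in> \<Sigma>"
      have "D (rc c) (asg zs) \<le> 0" using all c by (auto simp: \<Sigma>'_def)
      moreover have "D (rc c) (asg zs) = D c (asg (xs @ [y']))"
        unfolding Drc using fv\<Sigma>[OF c] zeq lx
        by (intro Dagree) (auto simp: asg_def nth_append h_def)
      ultimately show "D c (asg (xs @ [y'])) \<le> 0" by simp
    qed
    have "D cd (asg zs) \<le> 0" using all by (auto simp: \<Sigma>'_def)
    then have "\<epsilon> \<le> mdist S y y'" using zeq lx by (simp add: D_def cd_def asg_def nth_append)
    moreover have "mdist S y y' = 0" using 1 2 xt ms by (simp add: Metric_space.zero)
    ultimately show False using e by simp
  qed
  have "\<not> affinely_consistent S (Suc (Suc n)) [] \<Sigma>'"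
  proof
    assume ac: "affinely_consistent S (Suc (Suc n)) [] \<Sigma>'"
    have "set ([]::'a list) \<subseteq> univ S" by simp
    with sat wf' ac have "\<exists>zs\<in>tuples S (Suc (Suc n)). \<forall>c\<in>\<Sigma>'.
      feval S (asg (zs @ [])) (fst c) \<le> feval S (asg (zs @ [])) (snd c)"
      unfolding aleph0_saturated_def by blast
    with notreal show False by blast
  qed
  then obtain \<Sigma>0 w where fin: "finite \<Sigma>0" and sub: "\<Sigma>0 \<subseteq> \<Sigma>'" and wpos: "\<forall>c\<in>\<Sigma>0. 0 \<le> w c"
    and inf: "\<not> (INF xs\<in>tuples S (Suc (Suc n)). \<Sum>c\<in>\<Sigma>0. w c * D c (asg xs)) \<le> 0"
    unfolding affinely_consistent_def D_def by auto
  define F where "F zs = (\<Sum>c\<in>\<Sigma>0. w c * D c (asg zs))" for zs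
  have Fpos: "F zs > 0" if zt: "zs \<in> tuples S (Suc (Suc n))" for zs
  proof -
    define B where "B = (\<Sum>c\<in>\<Sigma>0. w c * (bnd (fst c) + bnd (snd c)))"
    have lowB: "- B \<le> F zs" if "zs \<in> tuples S (Suc (Suc n))" for zs
    proof -
      have lz: "length zs = Suc (Suc n)" and sz: "set zs \<subseteq> univ S" using that by (auto simp: tuples_def)
      define \<sigma> where "\<sigma> i = (if i < Suc (Suc n) then zs ! i else a0)" for i
      have \<sigma>u: "\<forall>i. \<sigma> i \<in> univ S" using sz lz a0 by (auto simp: \<sigma>_def)
      have "- (w c * (bnd (fst c) + bnd (snd c))) \<le> w c * D c (asg zs)" if c: "c \<in> \<Sigma>0" for c
      proof -
        have wc: "wf_condition fa ra (Suc (Suc n)) c" using wf' sub c by auto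
        have "D c (asg zs) = D c \<sigma>"
          using wc by (intro Dagree) (auto simp: wf_condition_def \<sigma>_def asg_def)
        moreover have "\<bar>feval S \<sigma> (fst c)\<bar> \<le> bnd (fst c)" "\<bar>feval S \<sigma> (snd c)\<bar> \<le> bnd (snd c)"
          using feval_bnd[OF S] wc \<sigma>u by (auto simp: wf_condition_def)
        ultimately have "- (bnd (fst c) + bnd (snd c)) \<le> D c (asg zs)"
          by (auto simp: D_def abs_le_iff)
        then have "w c * (- (bnd (fst c) + bnd (snd c))) \<le> w c * D c (asg zs)"
          using wpos c by (intro mult_left_mono) auto
        then show ?thesis by (simp add: algebra_simps)
      qed
      then have "(\<Sum>c\<in>\<Sigma>0. - (w c * (bnd (fst c) + bnd (snd c)))) \<le> F zs"
        unfolding F_def by (intro sum_mono) auto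
      then show ?thesis by (simp add: B_def sum_negf)
    qed
    have "bdd_below (F ` tuples S (Suc (Suc n)))"
      using lowB by (intro bdd_belowI2[where m="- B"]) auto
    then have "(INF xs\<in>tuples S (Suc (Suc n)). F xs) \<le> F zs" using zt by (intro cINF_lower) auto
    then show ?thesis using inf by (simp add: F_def)
  qed
  define \<Sigma>a where "\<Sigma>a = \<Sigma>0 \<inter> \<Sigma>"
  define \<Sigma>r where "\<Sigma>r = \<Sigma>0 \<inter> (rc ` \<Sigma> - \<Sigma>)"
  define w0 where "w0 = (if cd \<in> \<Sigma>0 then w cd else 0)"
  have w0nn: "w0 \<ge> 0" using wpos by (simp add: w0_def)
  have split: "F zs = (\<Sum>c\<in>\<Sigma>a. w c * D c (asg zs)) + (\<Sum>c\<in>\<Sigma>r. w c * D c (asg zs)) + w0 * D cd (asg zs)" for zs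
  proof -
    have un: "\<Sigma>0 = (\<Sigma>a \<union> \<Sigma>r) \<union> (\<Sigma>0 \<inter> {cd})" using sub by (auto simp: \<Sigma>a_def \<Sigma>r_def \<Sigma>'_def)
    have f1: "finite \<Sigma>a" "finite \<Sigma>r" "finite (\<Sigma>0 \<inter> {cd})" using fin by (auto simp: \<Sigma>a_def \<Sigma>r_def)
    have d1: "\<Sigma>a \<inter> \<Sigma>r = {}" by (auto simp: \<Sigma>a_def \<Sigma>r_def)
    have d2: "(\<Sigma>a \<union> \<Sigma>r) \<inter> (\<Sigma>0 \<inter> {cd}) = {}" using cd\<Sigma> cdrc by (auto simp: \<Sigma>a_def \<Sigma>r_def)
    have "F zs = (\<Sum>c\<in>\<Sigma>a \<union> \<Sigma>r. w c * D c (asg zs)) + (\<Sum>c\<in>\<Sigma>0 \<inter> {cd}. w c * D c (asg zs))"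
      unfolding F_def by (subst un, rule sum.union_disjoint) (use f1 d2 in auto)
    also have "(\<Sum>c\<in>\<Sigma>a \<union> \<Sigma>r. w c * D c (asg zs)) = (\<Sum>c\<in>\<Sigma>a. w c * D c (asg zs)) + (\<Sum>c\<in>\<Sigma>r. w c * D c (asg zs))"
      by (rule sum.union_disjoint) (use f1 d1 in auto)
    also have "(\<Sum>c\<in>\<Sigma>0 \<inter> {cd}. w c * D c (asg zs)) = w0 * D cd (asg zs)"
      by (cases "cd \<in> \<Sigma>0") (auto simp: w0_def)
    finally show ?thesis .
  qed
  have Aneg: "(\<Sum>c\<in>\<Sigma>a. w c * D c (asg (xs @ [f xs, z]))) \<le> 0" if xs: "xs \<in> tuples S n" for xs z
  proof (intro sum_nonpos mult_nonneg_nonpos)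
    fix c assume c: "c \<in> \<Sigma>a"
    show "0 \<le> w c" using c wpos by (auto simp: \<Sigma>a_def)
    have lx: "length xs = n" using xs by (simp add: tuples_def)
    show "D c (asg (xs @ [f xs, z])) \<le> 0"
      using c lx by (intro Gin[OF xs]) (auto simp: \<Sigma>a_def asg_def nth_append)
  qed
  have Rneg: "(\<Sum>c\<in>\<Sigma>r. w c * D c (asg (xs @ [y, f xs]))) \<le> 0" if xs: "xs \<in> tuples S n" for xs y
  proof (intro sum_nonpos mult_nonneg_nonpos)
    fix c assume c: "c \<in> \<Sigma>r"
    show "0 \<le> w c" using c wpos by (auto simp: \<Sigma>r_def)
    have lx: "length xs = n" using xs by (simp add: tuples_def)
    obtain c' where c': "c' \<in> \<Sigma>" "c = rc c'" using c by (auto simp: \<Sigma>r_def)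
    show "D c (asg (xs @ [y, f xs])) \<le> 0"
      unfolding c'(2) Drc
      using lx by (intro Gin[OF xs c'(1)]) (auto simp: asg_def nth_append h_def)
  qed
  have Rindep: "(\<Sum>c\<in>\<Sigma>r. w c * D c (asg (xs @ [y, z]))) = (\<Sum>c\<in>\<Sigma>r. w c * D c (asg (xs @ [y', z])))"
    if lx: "length xs = n" for xs y y' z
  proof (intro sum.cong refl arg_cong[where f="(*) _"])
    fix c assume c: "c \<in> \<Sigma>r"
    obtain c' where c': "c' \<in> \<Sigma>" "c = rc c'" using c by (auto simp: \<Sigma>r_def)
    have "\<forall>i\<in>fv (fst c) \<union> fv (snd c). i \<noteq> n" using fvrc[OF c'(1)] hn c'(2) by auto
    then show "D c (asg (xs @ [y, z])) = D c (asg (xs @ [y', z]))"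
      using lx by (intro Dagree) (auto simp: asg_def nth_append nth_Cons')
  qed
  define x0 where "x0 = replicate n a0"
  have x0: "x0 \<in> tuples S n" using a0 by (auto simp: x0_def tuples_def)
  have tup3: "xs @ [y, z] \<in> tuples S (Suc (Suc n))" if "xs \<in> tuples S n" "y \<in> univ S" "z \<in> univ S" for xs y z
    using that by (auto simp: tuples_def)
  have w0pos: "w0 > 0"
  proof (rule ccontr)
    assume "\<not> w0 > 0"
    then have w00: "w0 = 0" using w0nn by simp
    have fx0: "f x0 \<in> univ S" using fS x0 by auto
    have "F (x0 @ [f x0, f x0]) > 0" using Fpos tup3[OF x0 fx0 fx0] by blast
    moreover have "F (x0 @ [f x0, f x0]) \<le> 0"
      using split[of "x0 @ [f x0, f x0]"] Aneg[OF x0, of "f x0"] Rneg[OF x0, of "f x0"] w00 by simp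
    ultimately show False by simp
  qed
  have Rlow: "(\<Sum>c\<in>\<Sigma>r. w c * D c (asg (xs @ [y, z]))) / w0 \<ge> mdist S (f xs) z - \<epsilon>"
    if xs: "xs \<in> tuples S n" and z: "z \<in> univ S" for xs y z
  proof -
    have lx: "length xs = n" using xs by (simp add: tuples_def)
    have fx: "f xs \<in> univ S" using fS xs by auto
    have "F (xs @ [f xs, z]) > 0" using Fpos tup3[OF xs fx z] by blast
    moreover have "D cd (asg (xs @ [f xs, z])) = \<epsilon> - mdist S (f xs) z"
      using lx by (simp add: D_def cd_def asg_def nth_append)
    ultimately have "0 < (\<Sum>c\<in>\<Sigma>a. w c * D c (asg (xs @ [f xs, z]))) + (\<Sum>c\<in>\<Sigma>r. w c * D c (asg (xs @ [f xs, z])))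
        + w0 * (\<epsilon> - mdist S (f xs) z)"
      using split[of "xs @ [f xs, z]"] by simp
    then have "w0 * (mdist S (f xs) z - \<epsilon>) < (\<Sum>c\<in>\<Sigma>r. w c * D c (asg (xs @ [f xs, z])))"
      using Aneg[OF xs, of z] by (simp add: algebra_simps)
    then have "w0 * (mdist S (f xs) z - \<epsilon>) \<le> (\<Sum>c\<in>\<Sigma>r. w c * D c (asg (xs @ [y, z])))"
      using Rindep[OF lx, of y z "f xs"] by simp
    then show ?thesis using w0pos by (simp add: pos_le_divide_eq mult.commute)
  qed
  have finr: "finite \<Sigma>r" using fin by (simp add: \<Sigma>r_def)
  obtain L where L: "set L = \<Sigma>r" "distinct L" using finite_distinct_list[OF finr] by blast
  define R where "R = fsum w L"
  have evR: "feval S \<tau> R = (\<Sum>c\<in>\<Sigma>r. w c * D c \<tau>)" for \<tau>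
    unfolding R_def feval_fsum D_def using L by (simp add: sum_list_distinct_conv_sum_set)
  have \<Sigma>r': "\<forall>c\<in>\<Sigma>r. wf_condition fa ra (Suc (Suc n)) c" using wf' sub by (auto simp: \<Sigma>r_def \<Sigma>'_def)
  have fvR: "fv R \<subseteq> {..<Suc (Suc n)}"
    using fv_fsum[of w L] L \<Sigma>r' unfolding R_def by (fastforce simp: wf_condition_def)
  have wfR: "wf_formula fa ra R"
    unfolding R_def using L \<Sigma>r' by (intro wf_fsum) (auto simp: wf_condition_def)
  define \<theta> where "\<theta> = Inf (Suc n) (Add (Scale (1 / w0) R) (Dist (Var (Suc n)) (Var n)))"
  show ?thesis
  proof (intro exI conjI ballI)
    show "wf_formula fa ra \<theta>" using wfR by (simp add: \<theta>_def)
    show "fv \<theta> \<subseteq> {..<Suc n}" using fvR by (auto simp: \<theta>_def)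
    fix xs y assume xs: "xs \<in> tuples S n" and y: "y \<in> univ S"
    have lx: "length xs = n" using xs by (simp add: tuples_def)
    have fx: "f xs \<in> univ S" using fS xs by auto
    define T where "T z = (1 / w0) * (\<Sum>c\<in>\<Sigma>r. w c * D c (asg (xs @ [y, z]))) + mdist S z y" for z
    have val: "feval S (asg (xs @ [y])) \<theta> = (INF z\<in>univ S. T z)"
    proof -
      have "feval S ((asg (xs @ [y]))(Suc n := z)) R = feval S (asg (xs @ [y, z])) R" for z
        using fvR lx by (intro feval_agree) (auto simp: asg_def nth_append)
      moreover have "((asg (xs @ [y]))(Suc n := z)) n = y" for z using lx by (simp add: asg_def nth_append)
      ultimately show ?thesis unfolding \<theta>_def T_def by (simp add: evR)
    qed
    have low: "mdist S (f xs) y - \<epsilon> \<le> T z" if z: "z \<in> univ S" for z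
    proof -
      have "mdist S (f xs) z - \<epsilon> \<le> (1 / w0) * (\<Sum>c\<in>\<Sigma>r. w c * D c (asg (xs @ [y, z])))"
        using Rlow[OF xs z, of y] by simp
      moreover have "mdist S (f xs) y \<le> mdist S (f xs) z + mdist S z y"
        using Metric_space.triangle[OF ms fx z y] .
      ultimately show ?thesis by (simp add: T_def)
    qed
    have up: "T (f xs) \<le> mdist S (f xs) y"
    proof -
      have "(1 / w0) * (\<Sum>c\<in>\<Sigma>r. w c * D c (asg (xs @ [y, f xs]))) \<le> 0"
        using Rneg[OF xs, of y] w0pos by (simp add: divide_nonpos_pos)
      then show ?thesis by (simp add: T_def)
    qed
    have bb: "bdd_below (T ` univ S)" using low by (intro bdd_belowI2) auto
    have i1: "(INF z\<in>univ S. T z) \<le> mdist S (f xs) y"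
      using cINF_lower[OF bb fx] up by simp
    have i2: "mdist S (f xs) y - \<epsilon> \<le> (INF z\<in>univ S. T z)"
      using ne low by (intro cINF_greatest) auto
    show "\<bar>feval S (asg (xs @ [y])) \<theta> - mdist S (f xs) y\<bar> \<le> \<epsilon>"
      using val i1 i2 e by simp
  qed
qed



theorem mainTheorem13:
  fixes fa :: "'f \<Rightarrow> nat" and ra :: "'r \<Rightarrow> nat"
    and S :: "('f, 'r, 'a) lstruct" and n :: nat and f :: "'a list \<Rightarrow> 'a"
  assumes "is_structure fa ra S"
    and "aleph0_saturated fa ra S"
    and "\<forall>xs\<in>tuples S n. f xs \<in> univ S"
  shows "definable_fun fa ra S n f \<longleftrightarrow>
         type_definable fa ra S (Suc n) {xs @ [f xs] | xs. xs \<in> tuples S n}"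
proof
  assume "definable_fun fa ra S n f"
  then show "type_definable fa ra S (Suc n) {xs @ [f xs] | xs. xs \<in> tuples S n}"
    using easy_dir assms by blast
next
  assume "type_definable fa ra S (Suc n) {xs @ [f xs] | xs. xs \<in> tuples S n}"
  then obtain \<Sigma> :: "('f,'r) condition set" where wfc: "\<forall>c\<in>\<Sigma>. wf_condition fa ra (Suc n) c"
    and G: "{xs @ [f xs] | xs. xs \<in> tuples S n} =
      {xs\<in>tuples S (Suc n). \<forall>c\<in>\<Sigma>. feval S (asg xs) (fst c) \<le> feval S (asg xs) (snd c)}"
    unfolding type_definable_def by blast
  define Q where "Q \<epsilon> \<theta> \<longleftrightarrow> wf_formula fa ra \<theta> \<and> fv \<theta> \<subseteq> {..<Suc n} \<and>
     (\<forall>xs\<in>tuples S n. \<forall>y\<in>univ S. \<bar>feval S (asg (xs @ [y])) \<theta> - mdist S (f xs) y\<bar> \<le> \<epsilon>)"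
    for \<epsilon> :: real and \<theta> :: "('f,'r) aformula"
  have ex: "\<exists>\<theta>. Q \<epsilon> \<theta>" if "\<epsilon> > 0" for \<epsilon>
    unfolding Q_def using hard_eps[OF assms(1,2,3) wfc G that] .
  define \<phi>s where "\<phi>s k = (SOME \<theta>. Q (1 / (real k + 1)) \<theta>)" for k
  have \<phi>s: "Q (1 / (real k + 1)) (\<phi>s k)" for k
    unfolding \<phi>s_def by (rule someI_ex[OF ex]) simp
  show "definable_fun fa ra S n f"
    unfolding definable_fun_def definable_pred_def
  proof (rule exI[of _ \<phi>s], rule conjI)
    show "\<forall>k. wf_formula fa ra (\<phi>s k) \<and> fv (\<phi>s k) \<subseteq> {..<Suc n}" using \<phi>s by (simp add: Q_def)
  next
    show "\<forall>\<epsilon>>0. \<exists>N. \<forall>k\<ge>N. \<forall>xs\<in>tuples S (Suc n).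
      \<bar>feval S (asg xs) (\<phi>s k) - mdist S (f (take n xs)) (xs ! n)\<bar> \<le> \<epsilon>"
    proof (intro allI impI)
    fix \<epsilon> :: real assume e: "\<epsilon> > 0"
    obtain N where N: "inverse (real (Suc N)) < \<epsilon>" using reals_Archimedean[OF e] by blast
    show "\<exists>N. \<forall>k\<ge>N. \<forall>xs\<in>tuples S (Suc n).
      \<bar>feval S (asg xs) (\<phi>s k) - mdist S (f (take n xs)) (xs ! n)\<bar> \<le> \<epsilon>"
    proof (intro exI[of _ N] allI impI ballI)
      fix k zs assume k: "N \<le> k" and zs: "zs \<in> tuples S (Suc n)"
      have b: "\<bar>feval S (asg (take n zs @ [zs ! n])) (\<phi>s k) - mdist S (f (take n zs)) (zs ! n)\<bar> \<le> 1 / (real k + 1)"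
        using \<phi>s[of k] tuples_Suc_split(2,3)[OF zs] unfolding Q_def by blast
      have "1 / (real k + 1) \<le> 1 / (real N + 1)" using k by (simp add: frac_le)
      also have "\<dots> < \<epsilon>" using N by (simp add: inverse_eq_divide add.commute)
      finally show "\<bar>feval S (asg zs) (\<phi>s k) - mdist S (f (take n zs)) (zs ! n)\<bar> \<le> \<epsilon>"
        using b tuples_Suc_split(1)[OF zs] by simp
    qed
    qed
  qed
qed

end
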